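(* Let $N=pq$ where $1<p\le q$ are primes (not necessarily distinct), with $N$ odd, let $M=(N-1)/2$, let $r$ be an integer with $0<r\le M$, and let $$L_0=\max\{k=p^{\ell}q^{m} : \ell,m\in\{0,1\},\ k\le r\}.$$ Then for every integer $L$ with $L_0\le L\le M$, the inverse problem $\mathrm{IP}(N,r,L)$ is uniquely solvable; that is, for any two distinct ${\tt x},{\tt y}\in\Omega(N,r)$ there is some $m\in\{1,\dots,L\}$ with $\tilde{x}_m\neq\tilde{y}_m$.
   Context: For a vector ${\tt v}=(v_1,\dots,v_N)$ of odd length $N>1$, its DFT coefficients are $\tilde{v}_m=\sum_{n=1}^N v_n e^{\mathrm{i}\xi m n}$ with $\xi=2\pi/N$. A vector is binary if its entries are $0$ or $1$; $\Omega(N,r)$ is the set of binary vectors of length $N$ with exactly $r$ ones. For $1\le L\le M$, two vectors ${\tt x},{\tt y}\in\Omega(N,r)$ are $L$-distinguishable if $\tilde{x}_m\neq\tilde{y}_m$ for some $m\in\{1,\dots,L\}$. The inverse problem $\mathrm{IP}(N,r,L)$ (recovering ${\tt x}\in\Omega(N,r)$ from $\tilde{x}_1,\dots,\tilde{x}_L$) is uniquely solvable if all pairs of distinct vectors in $\Omega(N,r)$ are $L$-distinguishable. *)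

theory Defs
  imports "HOL-Analysis.Analysis" "HOL-Computational_Algebra.Primes"
begin

text \<open>Vectors of length N are functions on the index set {1..N}; binary vectors take
values 0/1 on {1..N} and (for uniqueness of representation) value 0 outside.\<close>

definition dft :: "nat \<Rightarrow> (nat \<Rightarrow> real) \<Rightarrow> nat \<Rightarrow> complex" where
  "dft N v m = (\<Sum>n=1..N. complex_of_real (v n) * exp (\<i> * complex_of_real (2 * pi / real N) * of_nat m * of_nat n))"

definition Omega :: "nat \<Rightarrow> nat \<Rightarrow> (nat \<Rightarrow> real) set" where
  "Omega N r = {v. (\<forall>n\<in>{1..N}. v n = 0 \<or> v n = 1) \<and> (\<forall>n. n \<notin> {1..N} \<longrightarrow> v n = 0)
                   \<and> card {n\<in>{1..N}. v n = 1} = r}"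

definition L_distinguishable :: "nat \<Rightarrow> nat \<Rightarrow> (nat \<Rightarrow> real) \<Rightarrow> (nat \<Rightarrow> real) \<Rightarrow> bool" where
  "L_distinguishable N L x y = (\<exists>m\<in>{1..L}. dft N x m \<noteq> dft N y m)"

definition uniquely_solvable :: "nat \<Rightarrow> nat \<Rightarrow> nat \<Rightarrow> bool" where
  "uniquely_solvable N r L = (\<forall>x\<in>Omega N r. \<forall>y\<in>Omega N r. x \<noteq> y \<longrightarrow> L_distinguishable N L x y)"

end

theory Submission
  imports Defs
begin


definition ev :: "int poly \<Rightarrow> complex \<Rightarrow> complex" where
  "ev P z = poly (map_poly of_int P) z"

lemma mpoi_add: "map_poly (of_int::int\<Rightarrow>'a::comm_ring_1) (P + Q) = map_poly of_int P + map_poly of_int Q"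
  by (rule poly_eqI) (simp add: coeff_map_poly)
lemma mpoi_diff: "map_poly (of_int::int\<Rightarrow>'a::comm_ring_1) (P - Q) = map_poly of_int P - map_poly of_int Q"
  by (rule poly_eqI) (simp add: coeff_map_poly)
lemma mpoi_mult: "map_poly (of_int::int\<Rightarrow>'a::comm_ring_1) (P * Q) = map_poly of_int P * map_poly of_int Q"
  by (rule poly_eqI) (simp add: coeff_map_poly coeff_mult)
lemma mpoi_smult: "map_poly (of_int::int\<Rightarrow>'a::comm_ring_1) (smult c Q) = smult (of_int c) (map_poly of_int Q)"
  by (rule poly_eqI) (simp add: coeff_map_poly)
lemma mpoi_pderiv: "map_poly (of_int::int\<Rightarrow>'a::{idom,ring_char_0}) (pderiv P) = pderiv (map_poly of_int P)"
  by (rule poly_eqI) (simp add: coeff_map_poly coeff_pderiv)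

lemma ev_add [simp]: "ev (P + Q) z = ev P z + ev Q z" by (simp add: ev_def mpoi_add)
lemma ev_diff [simp]: "ev (P - Q) z = ev P z - ev Q z" by (simp add: ev_def mpoi_diff)
lemma ev_mult [simp]: "ev (P * Q) z = ev P z * ev Q z" by (simp add: ev_def mpoi_mult)
lemma ev_smult [simp]: "ev (smult c Q) z = of_int c * ev Q z" by (simp add: ev_def mpoi_smult)
lemma ev_const [simp]: "ev [:c:] z = of_int c" by (simp add: ev_def map_poly_pCons)
lemma ev_0 [simp]: "ev 0 z = 0" by (simp add: ev_def)
lemma ev_1 [simp]: "ev 1 z = 1" by (simp add: ev_def)
lemma ev_monom [simp]: "ev (monom c n) z = of_int c * z ^ n" by (simp add: ev_def map_poly_monom poly_monom)
lemma ev_power [simp]: "ev (P ^ k) z = ev P z ^ k" by (induction k) auto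
lemma ev_pCons [simp]: "ev (pCons a P) z = of_int a + z * ev P z" by (simp add: ev_def map_poly_pCons)
lemma ev_pcompose: "ev (pcompose P R) z = ev P (ev R z)"
proof (induction P)
  case 0 then show ?case by simp
next
  case (pCons a p) then show ?case by (simp add: pcompose_pCons)
qed

lemma binom_prime:
  fixes a b :: "'a::comm_ring_1"
  assumes "prime l"
  shows "\<exists>c. (a + b) ^ l = a ^ l + b ^ l + of_nat l * c"
proof -
  have l1: "l \<ge> 2" using assms prime_ge_2_nat by blast
  have "(a + b) ^ l = (\<Sum>k\<le>l. of_nat (l choose k) * a ^ k * b ^ (l - k))"
    by (rule binomial_ring)
  also have "{..l} = insert 0 (insert l {1..<l})" using l1 by auto
  also have "(\<Sum>k\<in>insert 0 (insert l {1..<l}). of_nat (l choose k) * a ^ k * b ^ (l - k))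
     = b ^ l + (a ^ l + (\<Sum>k\<in>{1..<l}. of_nat (l choose k) * a ^ k * b ^ (l - k)))"
    using l1 by (subst sum.insert; simp)+
  also have "(\<Sum>k\<in>{1..<l}. of_nat (l choose k) * a ^ k * b ^ (l - k))
     = of_nat l * (\<Sum>k\<in>{1..<l}. of_nat ((l choose k) div l) * a ^ k * b ^ (l - k))"
    unfolding sum_distrib_left
  proof (rule sum.cong)
    fix k assume "k \<in> {1..<l}"
    then have "l dvd (l choose k)" using dvd_choose_prime[of k l] assms l1 by auto
    then have "of_nat (l choose k) = (of_nat l * of_nat ((l choose k) div l) :: 'a)"
      by (metis dvd_mult_div_cancel of_nat_mult)
    then show "of_nat (l choose k) * a ^ k * b ^ (l - k) = of_nat l * (of_nat ((l choose k) div l) * a ^ k * b ^ (l - k))"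
      by (simp add: mult.assoc)
  qed simp
  finally have "(a + b) ^ l = a ^ l + b ^ l + of_nat l * (\<Sum>k\<in>{1..<l}. of_nat ((l choose k) div l) * a ^ k * b ^ (l - k))"
    by (simp add: add.assoc)
  then show ?thesis by (rule exI)
qed



lemma fermat_int:
  assumes "prime l"
  shows "\<exists>k. (c::int) ^ l = c + int l * k"
proof (induction c rule: int_induct[where k=0])
  case base
  have "l > 0" using assms prime_gt_0_nat by blast
  then show ?case by (intro exI[of _ 0]) simp
next
  case (step1 i)
  then obtain k where k: "i ^ l = i + int l * k" by blast
  obtain c where c: "(i + 1) ^ l = i ^ l + 1 ^ l + of_nat l * c" using binom_prime[OF assms] by blast
  show ?case using k c by (intro exI[of _ "k + c"]) (simp add: algebra_simps)
next
  case (step2 i)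
  then obtain k where k: "i ^ l = i + int l * k" by blast
  obtain c where c: "((i - 1) + 1) ^ l = (i - 1) ^ l + 1 ^ l + of_nat l * c" using binom_prime[OF assms] by blast
  show ?case using k c by (intro exI[of _ "k - c"]) (simp add: algebra_simps)
qed

definition ZZ :: "complex \<Rightarrow> complex set" where
  "ZZ w = range (\<lambda>P. ev P w)"

lemma frob:
  assumes "prime l"
  shows "\<exists>Q. ev P w ^ l = ev P (w ^ l) + of_nat l * ev Q w"
proof (induction P)
  case 0
  have "l > 0" using assms prime_gt_0_nat by blast
  then show ?case by (intro exI[of _ 0]) simp
next
  case (pCons a P)
  then obtain Q where Q: "ev P w ^ l = ev P (w ^ l) + of_nat l * ev Q w" by blast
  obtain C where C: "([:a:] + pCons 0 P) ^ l = [:a:] ^ l + (pCons 0 P) ^ l + of_nat l * C"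
    using binom_prime[OF assms] by blast
  obtain k where k: "a ^ l = a + int l * k" using fermat_int[OF assms] by blast
  have e1: "ev (pCons a P) w = ev ([:a:] + pCons 0 P) w" by simp
  have "ev (pCons a P) w ^ l = ev (([:a:] + pCons 0 P) ^ l) w" by (simp only: e1 ev_power)
  also have "\<dots> = of_int (a ^ l) + (w * ev P w) ^ l + of_nat l * ev C w"
    by (simp only: C ev_add ev_mult ev_power ev_pCons ev_const) (simp add: of_nat_poly)
  also have "\<dots> = of_int a + of_nat l * of_int k + w ^ l * (ev P (w ^ l) + of_nat l * ev Q w) + of_nat l * ev C w"
    by (simp add: k power_mult_distrib Q)
  also have "\<dots> = ev (pCons a P) (w ^ l) + of_nat l * ev ([:k:] + monom 1 l * Q + C) w"
    by (simp add: algebra_simps)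
  finally show ?case by blast
qed



lemma ev_nonzero_const: "c \<noteq> 0 \<Longrightarrow> ev [:c:] z \<noteq> 0" by simp

lemma minpoly_exists:
  assumes wM: "w ^ M = 1" and M: "M > 0"
  obtains f h where "lead_coeff f = 1" "ev f w = 0" "degree f > 0"
    "\<And>g. ev g w = 0 \<Longrightarrow> g \<noteq> 0 \<Longrightarrow> degree f \<le> degree g"
    "monom 1 M - 1 = f * h"
proof -
  define G :: "int poly" where "G = monom 1 M - 1"
  have G0: "G \<noteq> 0"
  proof
    assume "G = 0"
    then have "coeff G M = 0" by simp
    then show False using M by (simp add: G_def)
  qed
  have evG: "ev G w = 0" using wM by (simp add: G_def)
  define S where "S = {g. ev g w = 0 \<and> g \<noteq> 0}"
  have "G \<in> S" using G0 evG by (simp add: S_def)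
  define d0 where "d0 = (LEAST d. \<exists>g\<in>S. degree g = d)"
  have "\<exists>g\<in>S. degree g = d0" unfolding d0_def by (rule LeastI[of _ "degree G"]) (use \<open>G \<in> S\<close> in blast)
  then obtain f0 where f0S: "f0 \<in> S" and df0: "degree f0 = d0" by blast
  have minS: "\<And>g. g \<in> S \<Longrightarrow> d0 \<le> degree g" unfolding d0_def by (rule Least_le) blast
  define f1 where "f1 = primitive_part f0"
  have f00: "f0 \<noteq> 0" and evf0: "ev f0 w = 0" using f0S by (auto simp: S_def)
  have "ev f0 w = of_int (content f0) * ev f1 w"
    by (metis content_times_primitive_part ev_smult f1_def)
  then have evf1: "ev f1 w = 0" using evf0 f00 by simp
  have f10: "f1 \<noteq> 0" using f00 by (simp add: f1_def)
  have df1: "degree f1 = d0" using df0 by (simp add: f1_def)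
  have cf1: "content f1 = 1" using f00 by (simp add: f1_def)
  have div1: "\<exists>a q. a \<noteq> 0 \<and> smult a g = f1 * q" if "ev g w = 0" for g
  proof -
    define r where "r = pseudo_mod g f1"
    obtain a q where aq: "a \<noteq> 0" "smult a g = f1 * q + r" using pseudo_mod(1)[OF f10, of g] r_def by blast
    have rdeg: "r = 0 \<or> degree r < degree f1" using pseudo_mod(2)[OF f10, of g] r_def by blast
    have "ev (smult a g) w = ev (f1 * q + r) w" using aq by simp
    then have evr: "ev r w = 0" using that evf1 by simp
    have "r = 0"
    proof (rule ccontr)
      assume "r \<noteq> 0"
      then have "r \<in> S" using evr by (simp add: S_def)
      then have "d0 \<le> degree r" by (rule minS)
      then show False using rdeg \<open>r \<noteq> 0\<close> df1 by simp
    qed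
    then show ?thesis using aq by auto
  qed
  obtain a q where aq: "a \<noteq> 0" "smult a G = f1 * q" using div1[OF evG] by blast
  have cG: "content G = 1"
  proof -
    have "content G dvd coeff G M" by (rule content_dvd_coeff)
    then have "content G dvd 1" using M by (simp add: G_def)
    then show ?thesis by (metis normalize_content is_unit_normalize)
  qed
  have "content (smult a G) = content (f1 * q)" using aq by simp
  then have cq: "content q = abs a" using cf1 cG by (simp add: content_mult)
  have "smult a G = smult (abs a) (f1 * primitive_part q)"
    using aq by (metis cq content_times_primitive_part mult_smult_right)
  also have "abs a = a * sgn a" by (simp add: abs_sgn mult.commute)
  finally have "smult a G = smult a (smult (sgn a) (f1 * primitive_part q))" by simp
  then have "G = smult (sgn a) (f1 * primitive_part q)"
    using aq(1) by (intro poly_eqI) (metis coeff_smult mult_cancel_left)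
  then have Geq: "G = f1 * smult (sgn a) (primitive_part q)" by simp
  define h1 where "h1 = smult (sgn a) (primitive_part q)"
  have cGM: "coeff G M = 1" using M by (simp add: G_def)
  have "degree G \<le> M" unfolding G_def
    by (rule degree_diff_le) (auto simp: degree_monom_le)
  moreover have "M \<le> degree G" using cGM by (intro le_degree) simp
  ultimately have "degree G = M" by simp
  then have "lead_coeff G = 1" using cGM by simp
  moreover have Gfh: "G = f1 * h1" using Geq h1_def by simp
  ultimately have "lead_coeff f1 * lead_coeff h1 = 1" by (simp add: lead_coeff_mult)
  then have lf: "lead_coeff f1 = 1 \<or> lead_coeff f1 = -1" by (auto simp add: zmult_eq_1_iff)
  define f where "f = smult (lead_coeff f1) f1"
  have "lead_coeff f = 1" using lf by (auto simp: f_def)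
  moreover have "ev f w = 0" by (simp add: f_def evf1)
  moreover have df: "degree f = d0" using lf df1 by (auto simp: f_def)
  moreover have "degree f > 0"
  proof (rule ccontr)
    assume "\<not> degree f > 0"
    then have "degree f1 = 0" using df df1 by simp
    then obtain c where "f1 = [:c:]" by (metis degree_eq_zeroE)
    then show False using evf1 f10 by simp
  qed
  moreover have "\<And>g. ev g w = 0 \<Longrightarrow> g \<noteq> 0 \<Longrightarrow> degree f \<le> degree g"
    using minS df by (simp add: S_def)
  moreover have "monom 1 M - 1 = f * smult (lead_coeff f1) h1"
    using Geq lf unfolding G_def h1_def f_def by auto
  ultimately show ?thesis using that by blast
qed



lemma monic_divmod:
  fixes f P :: "int poly"
  assumes "lead_coeff f = 1"
  shows "\<exists>q r. P = f * q + r \<and> (r = 0 \<or> degree r < degree f)"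
proof -
  have f0: "f \<noteq> 0" using assms by auto
  obtain q r where qr: "pseudo_divmod P f = (q, r)" by (cases "pseudo_divmod P f") auto
  from pseudo_divmod[OF f0 qr] assms show ?thesis by auto
qed

lemma ev_uminus [simp]: "ev (- P) z = - ev P z"
  by (metis diff_0 ev_diff ev_0)

lemma galois_prime:
  assumes wM: "w ^ M = 1" and M: "M > 0" and l: "prime l" and nd: "\<not> l dvd M"
    and D: "ev D w = 0"
  shows "ev D (w ^ l) = 0"
proof -
  obtain f h where lf: "lead_coeff f = 1" and evf: "ev f w = 0" and df: "degree f > 0"
    and minf: "\<And>g. ev g w = 0 \<Longrightarrow> g \<noteq> 0 \<Longrightarrow> degree f \<le> degree g"
    and fh: "monom 1 M - 1 = f * h"
    using minpoly_exists[OF wM M] by blast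
  have fdvd: "f dvd g" if "ev g w = 0" for g
  proof -
    obtain q r where qr: "g = f * q + r" and rd: "r = 0 \<or> degree r < degree f"
      using monic_divmod[OF lf] by blast
    have "ev r w = 0" using that evf qr by (metis add_0 ev_add ev_mult mult_zero_left)
    then have "r = 0" using minf rd by fastforce
    then show ?thesis using qr by simp
  qed
  have intdvd: "l dvd M" if "of_nat M = of_nat l * ev P w" for P
  proof -
    obtain q r where qr: "P = f * q + r" and rd: "r = 0 \<or> degree r < degree f"
      using monic_divmod[OF lf] by blast
    have evP: "ev P w = ev r w" using qr evf by simp
    define E where "E = [:int M:] - smult (int l) r"
    have evE: "ev E w = 0" using that evP by (simp add: E_def)
    have "degree E < degree f"
    proof -
      have "degree E \<le> max (degree [:int M:]) (degree (smult (int l) r))"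
        unfolding E_def by (rule degree_diff_le_max)
      also have "\<dots> \<le> max 0 (degree r)" by simp
      finally show ?thesis using rd df by auto
    qed
    then have "E = 0" using minf[OF evE] by fastforce
    then have "coeff E 0 = 0" by simp
    then have "int M = int l * coeff r 0" by (simp add: E_def)
    then have "int l dvd int M" by simp
    then show ?thesis by simp
  qed
  define u where "u = w ^ l"
  have "u ^ M = (w ^ M) ^ l" unfolding u_def by (simp only: power_mult[symmetric] mult.commute)
  then have uM: "u ^ M = 1" using wM by simp
  have l0: "l > 0" using l prime_gt_0_nat by blast
  have "ev f u = 0"
  proof (rule ccontr)
    assume fu: "ev f u \<noteq> 0"
    have "ev (monom 1 M - 1) u = 0" using uM by simp
    then have "ev f u * ev h u = 0" unfolding fh by simp
    then have hu: "ev h u = 0" using fu by simp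
    have "pderiv (monom 1 M - 1) = f * pderiv h + h * pderiv f" unfolding fh by (rule pderiv_mult)
    then have "ev (pderiv (monom 1 M - 1)) u = ev f u * ev (pderiv h) u"
      using hu by simp
    then have der: "of_nat M * u ^ (M - 1) = ev f u * ev (pderiv h) u"
      by (simp add: pderiv_monom pderiv_diff)
    obtain Q where Q: "ev f w ^ l = ev f (w ^ l) + of_nat l * ev Q w" using frob[OF l] by blast
    have "0 = ev f u + of_nat l * ev Q w" using Q evf l0 by (simp add: u_def zero_power)
    then have fuQ: "ev f u = - (of_nat l * ev Q w)" by (simp add: eq_neg_iff_add_eq_0)
    have uM1: "u ^ M = u ^ (M - 1) * u" using M by (cases M) (simp_all add: mult.commute)
    have "of_nat M = of_nat M * u ^ M" using uM by simp
    also have "\<dots> = (of_nat M * u ^ (M - 1)) * u" using uM1 by simp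
    also have "\<dots> = ev f u * ev (pderiv h) u * u" using der by simp
    also have "\<dots> = of_nat l * ev (- (Q * pcompose (pderiv h) (monom 1 l) * monom 1 l)) w"
      using fuQ by (simp add: ev_pcompose u_def[symmetric])
    finally have "of_nat M = of_nat l * ev (- (Q * pcompose (pderiv h) (monom 1 l) * monom 1 l)) w" .
    then have "l dvd M" by (rule intdvd)
    then show False using nd by simp
  qed
  obtain q where "D = f * q" using fdvd[OF D] by blast
  then show ?thesis using \<open>ev f u = 0\<close> by (simp add: u_def)
qed



lemma galois:
  assumes wM: "w ^ M = 1" and M: "M > 0" and ck: "coprime k M" and D: "ev D w = 0"
  shows "ev D (w ^ k) = 0"
  using ck
proof (induction k rule: less_induct)
  case (less k)
  show ?case
  proof (cases "k \<le> 1")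
    case True
    then consider "k = 0" | "k = 1" by linarith
    then show ?thesis
    proof cases
      case 1
      then have "M = 1" using less.prems by simp
      then have "w = 1" using wM by simp
      then show ?thesis using D 1 by simp
    next
      case 2
      then show ?thesis using D by simp
    qed
  next
    case False
    then obtain l where l: "prime l" "l dvd k" using prime_factor_nat[of k] by auto
    then obtain k' where k': "k = l * k'" by blast
    have "k' < k" using False l k' prime_gt_1_nat[OF l(1)] by (cases "k' = 0") auto
    moreover have "coprime k' M" using less.prems k' by simp
    ultimately have IH: "ev D (w ^ k') = 0" using less.IH by blast
    have w'M: "(w ^ k') ^ M = 1" using wM by (metis mult.commute power_mult power_one)
    have "\<not> l dvd M"
    proof
      assume "l dvd M"
      then have "l dvd gcd k M" using l by simp
      then show False using less.prems l by (simp add: prime_nat_iff)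
    qed
    then have "ev D ((w ^ k') ^ l) = 0" using galois_prime[OF w'M M l(1) _ IH] by blast
    then show ?thesis using k' by (simp add: power_mult mult.commute)
  qed
qed



definition zeta :: "nat \<Rightarrow> complex" where
  "zeta N = exp (2 * of_real pi * \<i> / of_nat N)"

lemma zeta_pow: "zeta N ^ k = exp (of_nat k * (2 * of_real pi * \<i> / of_nat N))"
  unfolding zeta_def by (rule exp_of_nat_mult[symmetric])

lemma zeta_pow_eq_1:
  assumes "N > 0"
  shows "zeta N ^ k = 1 \<longleftrightarrow> N dvd k"
proof -
  have e: "zeta N ^ k = exp (\<i> * complex_of_real (2 * pi * real k / real N))"
    unfolding zeta_pow by (rule arg_cong[where f=exp]) (simp add: field_simps)
  have "zeta N ^ k = 1 \<longleftrightarrow> (\<exists>n::int. 2 * pi * real k / real N = of_int (2 * n) * pi)"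
    unfolding e exp_eq_1 by simp
  also have "\<dots> \<longleftrightarrow> (\<exists>n::int. real k = of_int n * real N)"
  proof -
    have "2 * pi * real k / real N = of_int (2 * n) * pi \<longleftrightarrow> real k = of_int n * real N" for n :: int
    proof -
      have "2 * pi * real k / real N = of_int (2 * n) * pi \<longleftrightarrow> 2 * pi * real k = of_int (2 * n) * pi * real N"
        using assms by (simp add: divide_eq_eq)
      also have "\<dots> \<longleftrightarrow> (2 * pi) * real k = (2 * pi) * (of_int n * real N)"
        by (simp add: algebra_simps)
      also have "\<dots> \<longleftrightarrow> real k = of_int n * real N"
        using pi_gt_zero by (simp only: mult_cancel_left) simp
      finally show ?thesis .
    qed
    then show ?thesis by simp
  qed
  also have "\<dots> \<longleftrightarrow> N dvd k"
  proof
    assume "\<exists>n::int. real k = of_int n * real N"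
    then obtain n :: int where n: "real k = of_int n * real N" by blast
    then have "of_int (int k) = (of_int (n * int N) :: real)" by simp
    then have "int k = n * int N" by (simp only: of_int_eq_iff)
    then have "int N dvd int k" by simp
    then show "N dvd k" by simp
  next
    assume "N dvd k"
    then obtain c where "k = N * c" by blast
    then show "\<exists>n::int. real k = of_int n * real N" by (intro exI[of _ "int c"]) simp
  qed
  finally show ?thesis .
qed

lemma zeta_N: "N > 0 \<Longrightarrow> zeta N ^ N = 1" using zeta_pow_eq_1[of N N] by simp

lemma zeta_ne0: "zeta N \<noteq> 0" by (simp add: zeta_def)

definition four :: "nat \<Rightarrow> (nat \<Rightarrow> complex) \<Rightarrow> nat \<Rightarrow> complex" where
  "four N g j = (\<Sum>n<N. g n * zeta N ^ (j * n))"

definition periodic :: "nat \<Rightarrow> (nat \<Rightarrow> 'a) \<Rightarrow> bool" where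
  "periodic N g \<longleftrightarrow> (\<forall>n. g (n + N) = g n)"

lemma periodic_mult: "periodic N g \<Longrightarrow> g (n + k * N) = g n"
proof (induction k)
  case 0 then show ?case by simp
next
  case (Suc k)
  have "g (n + Suc k * N) = g ((n + k * N) + N)" by (simp add: algebra_simps)
  also have "\<dots> = g (n + k * N)" using Suc.prems unfolding periodic_def by blast
  finally show ?case using Suc by simp
qed

lemma periodic_mod: "periodic N g \<Longrightarrow> g (n mod N) = g n"
  using periodic_mult[of N g "n mod N" "n div N"] by simp

lemma periodic_sum_shift:
  fixes g :: "nat \<Rightarrow> 'a::ab_group_add"
  assumes "periodic N g"
  shows "(\<Sum>n<N. g (n + s)) = (\<Sum>n<N. g n)"
proof (induction s)
  case 0 then show ?case by simp
next
  case (Suc s)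
  have a: "(\<Sum>n<Suc N. g (n + s)) = g s + (\<Sum>n<N. g (n + Suc s))"
    by (subst sum.lessThan_Suc_shift) simp
  have b: "(\<Sum>n<Suc N. g (n + s)) = (\<Sum>n<N. g (n + s)) + g (N + s)" by simp
  have c: "g (N + s) = g s" using assms unfolding periodic_def by (metis add.commute)
  from a b c have "(\<Sum>n<N. g (n + Suc s)) = (\<Sum>n<N. g (n + s))" by (simp add: algebra_simps)
  then show ?case using Suc by simp
qed

lemma periodic_zeta: "N > 0 \<Longrightarrow> periodic N (\<lambda>n. zeta N ^ (j * n))"
  unfolding periodic_def by (simp add: algebra_simps power_add power_mult zeta_N)

lemma four_shift:
  assumes N: "N > 0" and g: "periodic N g"
  shows "zeta N ^ (j * s) * four N (\<lambda>n. g (n + s)) j = four N g j"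
proof -
  have per: "periodic N (\<lambda>n. g n * zeta N ^ (j * n))"
    using g periodic_zeta[OF N, of j] unfolding periodic_def by simp
  have "zeta N ^ (j * s) * four N (\<lambda>n. g (n + s)) j = (\<Sum>n<N. g (n + s) * zeta N ^ (j * (n + s)))"
    unfolding four_def sum_distrib_left by (rule sum.cong) (simp_all add: algebra_simps power_add)
  also have "\<dots> = four N g j" unfolding four_def by (rule periodic_sum_shift[OF per])
  finally show ?thesis .
qed

lemma geom_roots:
  assumes N: "N > 0"
  shows "(\<Sum>j<N. zeta N ^ (j * t)) = (if N dvd t then of_nat N else 0)"
proof (cases "N dvd t")
  case True
  then have "zeta N ^ t = 1" using zeta_pow_eq_1[OF N] by simp
  then have "zeta N ^ (j * t) = 1" for j by (metis mult.commute power_mult power_one)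
  then show ?thesis using True by simp
next
  case False
  define x where "x = zeta N ^ t"
  have x1: "x \<noteq> 1" using False zeta_pow_eq_1[OF N] by (simp add: x_def)
  have "x ^ N = 1" unfolding x_def using zeta_N[OF N] by (metis mult.commute power_mult power_one)
  have "(\<Sum>j<N. zeta N ^ (j * t)) = (\<Sum>j<N. x ^ j)"
    by (rule sum.cong) (simp_all add: x_def, metis mult.commute power_mult)
  also have "\<dots> = (x ^ N - 1) / (x - 1)" using x1 by (rule geometric_sum)
  also have "\<dots> = 0" using \<open>x ^ N = 1\<close> by simp
  finally show ?thesis using False by simp
qed

lemma four_inversion:
  assumes N: "N > 0" and g: "periodic N g" and z: "\<And>j. j < N \<Longrightarrow> four N g j = 0"
  shows "g n = 0"
proof -
  have main: "g m = 0" if m: "m < N" for m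
  proof -
    have "0 = (\<Sum>j<N. four N g j * zeta N ^ (j * (N - m)))" using z by simp
    also have "\<dots> = (\<Sum>j<N. \<Sum>n<N. g n * zeta N ^ (j * (n + (N - m))))"
      unfolding four_def sum_distrib_right
      by (rule sum.cong) (simp_all add: algebra_simps power_add)
    also have "\<dots> = (\<Sum>n<N. g n * (\<Sum>j<N. zeta N ^ (j * (n + (N - m)))))"
      by (subst sum.swap) (simp add: sum_distrib_left)
    also have "\<dots> = (\<Sum>n<N. g n * (if n = m then of_nat N else 0))"
    proof (rule sum.cong)
      fix n assume "n \<in> {..<N}"
      then have nN: "n < N" by simp
      have "N dvd (n + (N - m)) \<longleftrightarrow> n = m"
      proof
        assume "N dvd (n + (N - m))"
        then obtain c where c: "n + (N - m) = N * c" by blast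
        have "c \<noteq> 0"
        proof
          assume "c = 0"
          then have "n + (N - m) = 0" using c by simp
          then show False using m by simp
        qed
        moreover have "c < 2"
        proof (rule ccontr)
          assume "\<not> c < 2"
          then have "N * c \<ge> N * 2" by simp
          then show False using c nN m by linarith
        qed
        ultimately have "c = 1" by linarith
        then show "n = m" using c m by simp
      next
        assume "n = m" then show "N dvd (n + (N - m))" using m by simp
      qed
      then show "g n * (\<Sum>j<N. zeta N ^ (j * (n + (N - m)))) = g n * (if n = m then of_nat N else 0)"
        using geom_roots[OF N] by simp
    qed simp
    also have "\<dots> = g m * of_nat N" using m by (simp add: if_distrib sum.delta cong: if_cong)
    finally show ?thesis using N by simp
  qed
  have "g n = g (n mod N)" using periodic_mod[OF g] by simp
  then show ?thesis using main N by simp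
qed



definition idx :: "nat \<Rightarrow> nat \<Rightarrow> nat" where
  "idx N n = (if n mod N = 0 then N else n mod N)"

definition gint :: "nat \<Rightarrow> (nat \<Rightarrow> real) \<Rightarrow> (nat \<Rightarrow> real) \<Rightarrow> nat \<Rightarrow> int" where
  "gint N x y n = (if x (idx N n) = 1 then 1 else 0) - (if y (idx N n) = 1 then 1 else 0)"

lemma idx_per: "idx N (n + N) = idx N n" by (simp add: idx_def)

lemma idx_id: "n \<in> {1..N} \<Longrightarrow> idx N n = n"
  by (cases "n = N") (auto simp: idx_def)

lemma idx_lt: "n < N \<Longrightarrow> idx N n = (if n = 0 then N else n)"
  by (simp add: idx_def)

lemma gint_per: "periodic N (gint N x y)"
  unfolding periodic_def gint_def by (simp add: idx_per)

lemma gper: "periodic N (\<lambda>n. complex_of_int (gint N x y n))"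
  using gint_per unfolding periodic_def by simp

lemma gint_vals: "gint N x y n \<in> {-1, 0, 1}"
  unfolding gint_def by auto

lemma OmegaD:
  assumes "x \<in> Omega N r"
  shows "\<And>n. n \<in> {1..N} \<Longrightarrow> x n = 0 \<or> x n = 1" "\<And>n. n \<notin> {1..N} \<Longrightarrow> x n = 0"
    "card {n\<in>{1..N}. x n = 1} = r"
  using assms unfolding Omega_def by auto

lemma exp_zeta:
  "exp (\<i> * complex_of_real (2 * pi / real N) * of_nat m * of_nat n) = zeta N ^ (m * n)"
  unfolding zeta_pow by (rule arg_cong[where f=exp]) (simp add: field_simps)

lemma sum_1N:
  fixes F :: "nat \<Rightarrow> complex"
  assumes "periodic N F"
  shows "(\<Sum>n=1..N. F n) = (\<Sum>n<N. F n)"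
proof -
  have "(\<Sum>n=1..N. F n) = (\<Sum>n<N. F (n + 1))"
  proof -
    have "{1..N} = Suc ` {..<N}" by (auto simp: image_iff) (metis Suc_pred' le_neq_implies_less lessThan_iff less_Suc_eq_le not_less0 not_less_eq_eq)
    then show ?thesis by (simp add: sum.reindex)
  qed
  also have "\<dots> = (\<Sum>n<N. F n)" by (rule periodic_sum_shift[OF assms])
  finally show ?thesis .
qed

lemma dft_diff:
  assumes N: "N > 0" and x: "x \<in> Omega N r" and y: "y \<in> Omega N r"
  shows "dft N x m - dft N y m = four N (\<lambda>n. complex_of_int (gint N x y n)) m"
proof -
  have "dft N x m - dft N y m = (\<Sum>n=1..N. complex_of_int (gint N x y n) * zeta N ^ (m * n))"
    unfolding dft_def sum_subtractf[symmetric]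
  proof (rule sum.cong)
    fix n assume n: "n \<in> {1..N}"
    have eq: "complex_of_real (x n) - complex_of_real (y n) = complex_of_int (gint N x y n)"
      using OmegaD(1)[OF x n] OmegaD(1)[OF y n] by (auto simp: gint_def idx_id[OF n])
    then show "complex_of_real (x n) * exp (\<i> * complex_of_real (2 * pi / real N) * of_nat m * of_nat n) -
          complex_of_real (y n) * exp (\<i> * complex_of_real (2 * pi / real N) * of_nat m * of_nat n) =
          complex_of_int (gint N x y n) * zeta N ^ (m * n)"
      unfolding exp_zeta by (metis eq left_diff_distrib)
  qed simp
  also have "\<dots> = four N (\<lambda>n. complex_of_int (gint N x y n)) m"
    unfolding four_def
    by (rule sum_1N) (use gper[of N x y] periodic_zeta[OF N, of m] in \<open>simp add: periodic_def\<close>)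
  finally show ?thesis .
qed

lemma dft_zero:
  assumes x: "x \<in> Omega N r"
  shows "dft N x 0 = of_nat r"
proof -
  have "dft N x 0 = (\<Sum>n\<in>{1..N}. if x n = 1 then 1 else 0)"
    unfolding dft_def by (rule sum.cong) (use OmegaD(1)[OF x] in auto)
  also have "\<dots> = (\<Sum>n\<in>{n\<in>{1..N}. x n = 1}. (1::complex))"
    by (rule sum.inter_filter[symmetric]) simp
  also have "\<dots> = of_nat (card {n\<in>{1..N}. x n = 1})"
    by simp
  finally show ?thesis using OmegaD(3)[OF x] by simp
qed

lemma four_zero:
  assumes N: "N > 0" and x: "x \<in> Omega N r" and y: "y \<in> Omega N r"
  shows "four N (\<lambda>n. complex_of_int (gint N x y n)) 0 = 0"
  using dft_diff[OF assms, of 0] dft_zero[OF x] dft_zero[OF y] by simp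

lemma gint_sum0:
  assumes N: "N > 0" and x: "x \<in> Omega N r" and y: "y \<in> Omega N r"
  shows "(\<Sum>n<N. gint N x y n) = 0"
proof -
  have "complex_of_int (\<Sum>n<N. gint N x y n) = 0"
    using four_zero[OF assms] unfolding four_def by simp
  then show ?thesis by (simp only: of_int_eq_0_iff)
qed

lemma gint_all0:
  assumes x: "x \<in> Omega N r" and y: "y \<in> Omega N r" and N: "N > 0"
    and z: "\<And>n. n < N \<Longrightarrow> gint N x y n = 0"
  shows "x = y"
proof
  fix n
  show "x n = y n"
  proof (cases "n \<in> {1..N}")
    case True
    have "gint N x y n = gint N x y (n mod N)" using periodic_mod[OF gint_per] by simp
    also have "\<dots> = 0" using z N by simp
    finally have "gint N x y n = 0" .
    then show ?thesis using OmegaD(1)[OF x True] OmegaD(1)[OF y True]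
      by (auto simp: gint_def idx_id[OF True] split: if_splits)
  next
    case False
    then show ?thesis using OmegaD(2)[OF x] OmegaD(2)[OF y] by simp
  qed
qed

lemma exists_pos:
  assumes x: "x \<in> Omega N r" and y: "y \<in> Omega N r" and N: "N > 0" and xy: "x \<noteq> y"
  shows "\<exists>n0<N. gint N x y n0 = 1"
proof (rule ccontr)
  assume neg: "\<not> ?thesis"
  have le: "\<forall>n\<in>{..<N}. 0 \<le> - gint N x y n"
  proof
    fix n assume "n \<in> {..<N}"
    then have "gint N x y n \<noteq> 1" using neg by auto
    moreover have "gint N x y n \<in> {-1, 0, 1}" by (rule gint_vals)
    ultimately show "0 \<le> - gint N x y n" by auto
  qed
  have "(\<Sum>n<N. - gint N x y n) = 0" using gint_sum0[OF N x y] by (simp add: sum_negf)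
  then have "\<forall>n\<in>{..<N}. - gint N x y n = 0" using sum_nonneg_eq_0_iff[of "{..<N}" "\<lambda>n. - gint N x y n"] le by simp
  then have "x = y" using gint_all0[OF x y N] by simp
  then show False using xy by simp
qed

lemma card_pos_le:
  assumes x: "x \<in> Omega N r"
  shows "card {n. n < N \<and> gint N x y n = 1} \<le> r"
proof -
  have "{n. n < N \<and> gint N x y n = 1} \<subseteq> {n. n < N \<and> x (idx N n) = 1}"
    by (auto simp: gint_def split: if_splits)
  then have "card {n. n < N \<and> gint N x y n = 1} \<le> card {n. n < N \<and> x (idx N n) = 1}"
    by (intro card_mono) auto
  also have "card {n. n < N \<and> x (idx N n) = 1} = card (idx N ` {n. n < N \<and> x (idx N n) = 1})"
    by (rule card_image[symmetric]) (auto simp: inj_on_def idx_lt split: if_splits)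
  also have "idx N ` {n. n < N \<and> x (idx N n) = 1} \<subseteq> {n\<in>{1..N}. x n = 1}"
    by (auto simp: idx_lt)
  then have "card (idx N ` {n. n < N \<and> x (idx N n) = 1}) \<le> card {n\<in>{1..N}. x n = 1}"
    by (intro card_mono) auto
  finally show ?thesis using OmegaD(3)[OF x] by simp
qed

lemma card_neg_le:
  assumes y: "y \<in> Omega N r"
  shows "card {n. n < N \<and> gint N x y n = -1} \<le> r"
proof -
  have "{n. n < N \<and> gint N x y n = -1} \<subseteq> {n. n < N \<and> y (idx N n) = 1}"
    by (auto simp: gint_def split: if_splits)
  then have "card {n. n < N \<and> gint N x y n = -1} \<le> card {n. n < N \<and> y (idx N n) = 1}"
    by (intro card_mono) auto
  also have "card {n. n < N \<and> y (idx N n) = 1} = card (idx N ` {n. n < N \<and> y (idx N n) = 1})"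
    by (rule card_image[symmetric]) (auto simp: inj_on_def idx_lt split: if_splits)
  also have "idx N ` {n. n < N \<and> y (idx N n) = 1} \<subseteq> {n\<in>{1..N}. y n = 1}"
    by (auto simp: idx_lt)
  then have "card (idx N ` {n. n < N \<and> y (idx N n) = 1}) \<le> card {n\<in>{1..N}. y n = 1}"
    by (intro card_mono) auto
  finally show ?thesis using OmegaD(3)[OF y] by simp
qed



lemma four_diff: "four N (\<lambda>n. a n - b n) j = four N a j - four N b j"
  unfolding four_def by (simp add: sum_subtractf left_diff_distrib)
lemma four_add: "four N (\<lambda>n. a n + b n) j = four N a j + four N b j"
  unfolding four_def by (simp add: sum.distrib distrib_right)

lemma shift1:
  assumes N: "N > 0" and g: "periodic N g"
    and z: "\<And>j. j < N \<Longrightarrow> (1 - zeta N ^ (j * s)) * four N g j = 0"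
  shows "g (n + s) = g n"
proof -
  define h where "h n = g (n + s) - g n" for n
  have gp: "\<And>m. g (m + N) = g m" using g by (simp add: periodic_def)
  have hp: "periodic N h" unfolding periodic_def h_def
  proof
    fix n show "g (n + N + s) - g (n + N) = g (n + s) - g n"
      using gp[of "n + s"] gp[of n] by (simp add: ac_simps)
  qed
  have "four N h j = 0" if j: "j < N" for j
  proof -
    have "zeta N ^ (j * s) * four N h j = zeta N ^ (j * s) * four N (\<lambda>n. g (n + s)) j - zeta N ^ (j * s) * four N g j"
      unfolding h_def four_diff by (simp add: algebra_simps)
    also have "\<dots> = four N g j - zeta N ^ (j * s) * four N g j" by (simp only: four_shift[OF N g])
    also have "\<dots> = (1 - zeta N ^ (j * s)) * four N g j" by (simp add: algebra_simps)
    also have "\<dots> = 0" using z[OF j] .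
    finally show ?thesis using zeta_ne0 by simp
  qed
  then have "h n = 0" using four_inversion[OF N hp] by blast
  then show ?thesis by (simp add: h_def)
qed

lemma shift2:
  assumes N: "N > 0" and g: "periodic N g"
    and z: "\<And>j. j < N \<Longrightarrow> (1 - zeta N ^ (j * s)) * (1 - zeta N ^ (j * t)) * four N g j = 0"
  shows "g (n + s + t) - g (n + s) - g (n + t) + g n = 0"
proof -
  define h where "h n = g (n + (s + t)) - g (n + s) - g (n + t) + g n" for n
  have gp: "\<And>m. g (m + N) = g m" using g by (simp add: periodic_def)
  have hp: "periodic N h" unfolding periodic_def h_def
  proof
    fix n show "g (n + N + (s + t)) - g (n + N + s) - g (n + N + t) + g (n + N) = g (n + (s + t)) - g (n + s) - g (n + t) + g n"
      using gp[of "n + (s + t)"] gp[of "n + s"] gp[of "n + t"] gp[of n] by (simp add: ac_simps)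
  qed
  have "four N h j = 0" if j: "j < N" for j
  proof -
    define A where "A = four N (\<lambda>n. g (n + (s + t))) j"
    define B where "B = four N (\<lambda>n. g (n + s)) j"
    define C where "C = four N (\<lambda>n. g (n + t)) j"
    define G where "G = four N g j"
    define zs where "zs = zeta N ^ (j * s)"
    define zt where "zt = zeta N ^ (j * t)"
    have e1: "(zs * zt) * A = G"
    proof -
      have "zeta N ^ (j * (s + t)) * A = G" unfolding A_def G_def by (rule four_shift[OF N g])
      moreover have "zeta N ^ (j * (s + t)) = zs * zt" unfolding zs_def zt_def by (simp add: algebra_simps power_add)
      ultimately show ?thesis by simp
    qed
    have e2: "zs * B = G" unfolding zs_def B_def G_def by (rule four_shift[OF N g])
    have e3: "zt * C = G" unfolding zt_def C_def G_def by (rule four_shift[OF N g])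
    have fh: "four N h j = A - B - C + G"
      unfolding h_def A_def B_def C_def G_def four_diff four_add ..
    have "(zs * zt) * four N h j = (zs * zt) * A - zt * (zs * B) - zs * (zt * C) + (zs * zt) * G"
      unfolding fh by (simp add: algebra_simps)
    also have "\<dots> = (1 - zs) * (1 - zt) * G" unfolding e1 e2 e3 by (simp add: algebra_simps)
    also have "\<dots> = 0" using z[OF j] unfolding zs_def zt_def G_def .
    finally show ?thesis using zeta_ne0 by (simp add: zs_def zt_def)
  qed
  then have "h n = 0" using four_inversion[OF N hp] by blast
  then show ?thesis by (simp add: h_def add.assoc)
qed

lemma mod_inj_aux:
  fixes p q a k k' :: nat
  assumes p: "p > 0" and k: "k \<le> k'" and k': "k' < q"
    and e: "(a + k * p) mod (p * q) = (a + k' * p) mod (p * q)"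
  shows "k = k'"
proof -
  have le: "a + k * p \<le> a + k' * p" using k by simp
  have e': "(a + k' * p) mod (p * q) = (a + k * p) mod (p * q)" using e by simp
  have "p * q dvd (a + k' * p) - (a + k * p)"
    using e' mod_eq_dvd_iff_nat[OF le] by blast
  also have "(a + k' * p) - (a + k * p) = (k' - k) * p" by (simp add: diff_mult_distrib)
  finally have "q * p dvd (k' - k) * p" by (simp add: mult.commute)
  then have "q dvd k' - k" using p by simp
  moreover have "k' - k < q" using k' by simp
  ultimately have "k' - k = 0" using nat_dvd_not_less by blast
  then show ?thesis using k by simp
qed

lemma mod_inj:
  fixes p q a k k' :: nat
  assumes p: "p > 0" and "k < q" "k' < q"
    and e: "(a + k * p) mod (p * q) = (a + k' * p) mod (p * q)"
  shows "k = k'"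
proof (cases "k \<le> k'")
  case True then show ?thesis using mod_inj_aux[OF p True] assms by blast
next
  case False then show ?thesis using mod_inj_aux[of p k' k q a] assms by simp
qed

lemma caseB:
  assumes pq: "N = p * q" and p: "p > 0" and q: "q > 0"
    and x: "x \<in> Omega N r" and y: "y \<in> Omega N r" and xy: "x \<noteq> y"
    and van: "\<And>j. j < N \<Longrightarrow> j = 0 \<or> \<not> q dvd j \<Longrightarrow> four N (\<lambda>n. complex_of_int (gint N x y n)) j = 0"
  shows "q \<le> r"
proof -
  have N: "N > 0" using pq p q by simp
  let ?g = "\<lambda>n. complex_of_int (gint N x y n)"
  have sh: "?g (n + p) = ?g n" for n
  proof (rule shift1[OF N gper])
    fix j assume j: "j < N"
    show "(1 - zeta N ^ (j * p)) * four N ?g j = 0"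
    proof (cases "j = 0 \<or> \<not> q dvd j")
      case True then show ?thesis using van[OF j] by simp
    next
      case False
      then obtain k where "j = q * k" by blast
      then have "zeta N ^ (j * p) = 1" using zeta_pow_eq_1[OF N] pq by simp
      then show ?thesis by simp
    qed
  qed
  then have shi: "gint N x y (n + p) = gint N x y n" for n
    by (metis of_int_eq_iff)
  have shk: "gint N x y (n + k * p) = gint N x y n" for n k
  proof (induction k)
    case 0 then show ?case by simp
  next
    case (Suc k)
    have "gint N x y (n + Suc k * p) = gint N x y ((n + k * p) + p)" by (simp add: algebra_simps)
    also have "\<dots> = gint N x y (n + k * p)" by (rule shi)
    finally show ?case using Suc by simp
  qed
  obtain n0 where n0: "n0 < N" "gint N x y n0 = 1" using exists_pos[OF x y N xy] by blast
  define F where "F k = (n0 + k * p) mod N" for k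
  have "F ` {..<q} \<subseteq> {n. n < N \<and> gint N x y n = 1}"
  proof
    fix m assume "m \<in> F ` {..<q}"
    then obtain k where m: "m = F k" by blast
    have "gint N x y m = gint N x y (n0 + k * p)" unfolding m F_def by (rule periodic_mod[OF gint_per])
    then show "m \<in> {n. n < N \<and> gint N x y n = 1}" using n0 shk N m F_def by simp
  qed
  then have "card (F ` {..<q}) \<le> card {n. n < N \<and> gint N x y n = 1}" by (intro card_mono) auto
  moreover have "card (F ` {..<q}) = q"
  proof -
    have "inj_on F {..<q}" unfolding inj_on_def F_def pq using mod_inj[OF p] by blast
    then show ?thesis by (simp add: card_image)
  qed
  ultimately show ?thesis using card_pos_le[OF x, of y] by simp
qed

lemma caseC:
  assumes N: "N > 0"
    and x: "x \<in> Omega N r" and y: "y \<in> Omega N r"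
    and van: "\<And>j. j < N \<Longrightarrow> four N (\<lambda>n. complex_of_int (gint N x y n)) j = 0"
  shows "x = y"
proof -
  have "complex_of_int (gint N x y n) = 0" for n
    using four_inversion[OF N gper van] by blast
  then show ?thesis using gint_all0[OF x y N] by simp
qed



lemma modeq_aux:
  fixes a b p q :: nat
  assumes cp: "coprime p q" and le: "a \<le> b"
    and ep: "a mod p = b mod p" and eq: "a mod q = b mod q"
  shows "a mod (p * q) = b mod (p * q)"
proof -
  have "p dvd b - a" using ep[symmetric] mod_eq_dvd_iff_nat[OF le] by blast
  moreover have "q dvd b - a" using eq[symmetric] mod_eq_dvd_iff_nat[OF le] by blast
  ultimately have "p * q dvd b - a" using cp by (rule divides_mult)
  then have "b mod (p * q) = a mod (p * q)" using mod_eq_dvd_iff_nat[OF le] by blast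
  then show ?thesis by simp
qed

lemma modeq:
  fixes a b p q :: nat
  assumes cp: "coprime p q"
    and ep: "a mod p = b mod p" and eq: "a mod q = b mod q"
  shows "a mod (p * q) = b mod (p * q)"
proof (cases "a \<le> b")
  case True then show ?thesis using modeq_aux[OF cp True ep eq] by simp
next
  case False then show ?thesis using modeq_aux[OF cp _ ep[symmetric] eq[symmetric]] by simp
qed

lemma crt_inj:
  fixes p q :: nat
  assumes cp: "coprime p q"
  shows "inj_on (\<lambda>n. (n mod p, n mod q)) {..<p * q}"
proof (rule inj_onI)
  fix a b assume a: "a \<in> {..<p * q}" and b: "b \<in> {..<p * q}"
    and e: "(a mod p, a mod q) = (b mod p, b mod q)"
  then have "a mod (p * q) = b mod (p * q)" using modeq[OF cp, of a b] by simp
  then show "a = b" using a b by simp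
qed

lemma crt_surj:
  fixes p q :: nat
  assumes cp: "coprime p q" and p: "p > 0" and q: "q > 0"
  shows "(\<lambda>n. (n mod p, n mod q)) ` {..<p * q} = {..<p} \<times> {..<q}"
proof (rule card_subset_eq)
  show "finite ({..<p} \<times> {..<q})" by simp
  show "(\<lambda>n. (n mod p, n mod q)) ` {..<p * q} \<subseteq> {..<p} \<times> {..<q}" using p q by auto
  show "card ((\<lambda>n. (n mod p, n mod q)) ` {..<p * q}) = card ({..<p} \<times> {..<q})"
    using crt_inj[OF cp] by (simp add: card_image card_cartesian_product)
qed

lemma crt_exists:
  fixes p q :: nat
  assumes cp: "coprime p q" and p: "p > 0" and q: "q > 0" and i: "i < p" and j: "j < q"
  shows "\<exists>n. n < p * q \<and> n mod p = i \<and> n mod q = j"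
proof -
  have "(i, j) \<in> (\<lambda>n. (n mod p, n mod q)) ` {..<p * q}" using crt_surj[OF cp p q] i j by simp
  then show ?thesis by auto
qed

lemma bilinear_bound:
  fixes u v p q :: nat
  assumes "1 \<le> u" "u + 1 \<le> p" "1 \<le> v" "v + 1 \<le> q"
  shows "u * v + (p - u) * (q - v) + 2 \<ge> p + q"
proof -
  obtain a where a: "u = a + 1" using assms(1) by (metis add.commute le_Suc_ex plus_1_eq_Suc)
  obtain b where b: "v = b + 1" using assms(3) by (metis add.commute le_Suc_ex plus_1_eq_Suc)
  obtain A where A: "p = u + A + 1" using assms(2) by (metis add.assoc le_Suc_ex add.commute)
  obtain B where B: "q = v + B + 1" using assms(4) by (metis add.assoc le_Suc_ex add.commute)
  have "p - u = A + 1" using A by simp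
  moreover have "q - v = B + 1" using B by simp
  ultimately show ?thesis using a b A B by (simp add: algebra_simps)
qed



definition crt :: "nat \<Rightarrow> nat \<Rightarrow> nat \<Rightarrow> nat \<Rightarrow> nat" where
  "crt p q i j = (SOME n. n < p * q \<and> n mod p = i \<and> n mod q = j)"

lemma crt_prop:
  assumes cp: "coprime p q" and p: "p > 0" and q: "q > 0" and i: "i < p" and j: "j < q"
  shows "crt p q i j < p * q" "crt p q i j mod p = i" "crt p q i j mod q = j"
proof -
  have "\<exists>n. n < p * q \<and> n mod p = i \<and> n mod q = j" by (rule crt_exists[OF assms])
  then have "crt p q i j < p * q \<and> crt p q i j mod p = i \<and> crt p q i j mod q = j"
    unfolding crt_def by (rule someI_ex)
  then show "crt p q i j < p * q" "crt p q i j mod p = i" "crt p q i j mod q = j" by auto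
qed

context
  fixes p q N r :: nat and x y :: "nat \<Rightarrow> real"
  assumes pP: "prime p" and qP: "prime q" and pq: "p < q" and NN: "N = p * q"
    and x: "x \<in> Omega N r" and y: "y \<in> Omega N r" and xy: "x \<noteq> y" and rp: "r < p"
    and van: "\<And>j. j < N \<Longrightarrow> j = 0 \<or> coprime j N \<Longrightarrow> four N (\<lambda>n. complex_of_int (gint N x y n)) j = 0"
begin

lemma A_basic: "p > 0" "q > 0" "N > 0" "coprime p q"
  using pP qP pq NN prime_gt_0_nat primes_coprime by auto

lemma A_cross0: "gint N x y (n + a * p + b * q) - gint N x y (n + a * p) - gint N x y (n + b * q) + gint N x y n = 0"
proof -
  have N: "N > 0" by (rule A_basic)
  let ?g = "\<lambda>n. complex_of_int (gint N x y n)"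
  have "?g (n + a * p + b * q) - ?g (n + a * p) - ?g (n + b * q) + ?g n = 0"
  proof (rule shift2[OF N gper])
    fix j assume j: "j < N"
    show "(1 - zeta N ^ (j * (a * p))) * (1 - zeta N ^ (j * (b * q))) * four N ?g j = 0"
    proof (cases "j = 0 \<or> coprime j N")
      case True then show ?thesis using van[OF j] by simp
    next
      case False
      then have "\<not> coprime j p \<or> \<not> coprime j q" using NN by simp
      then have "p dvd j \<or> q dvd j" using prime_imp_coprime[OF pP] prime_imp_coprime[OF qP]
        by (metis coprime_commute)
      then show ?thesis
      proof
        assume "p dvd j"
        then obtain c where "j = p * c" by blast
        then have "j * (b * q) = N * (c * b)" using NN by (simp add: algebra_simps)
        then have "N dvd j * (b * q)" by (metis dvd_triv_left)
        then have "zeta N ^ (j * (b * q)) = 1" using zeta_pow_eq_1[OF N] by blast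
        then show ?thesis by simp
      next
        assume "q dvd j"
        then obtain c where "j = q * c" by blast
        then have "j * (a * p) = N * (c * a)" using NN by (simp add: algebra_simps)
        then have "N dvd j * (a * p)" by (metis dvd_triv_left)
        then have "zeta N ^ (j * (a * p)) = 1" using zeta_pow_eq_1[OF N] by blast
        then show ?thesis by simp
      qed
    qed
  qed
  then have "complex_of_int (gint N x y (n + a * p + b * q) - gint N x y (n + a * p) - gint N x y (n + b * q) + gint N x y n) = 0"
    by simp
  then show ?thesis by (simp only: of_int_eq_0_iff)
qed

abbreviation G :: "nat \<Rightarrow> nat \<Rightarrow> int" where
  "G i j \<equiv> gint N x y (crt p q i j)"

lemma A_crt: "i < p \<Longrightarrow> j < q \<Longrightarrow> crt p q i j < N \<and> crt p q i j mod p = i \<and> crt p q i j mod q = j"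
  using crt_prop[OF A_basic(4) A_basic(1) A_basic(2)] NN by blast

lemma A_res:
  assumes i: "i < p" and j: "j < q" and mi: "m mod p = i" and mj: "m mod q = j"
  shows "gint N x y m = G i j"
proof -
  have "m mod N = crt p q i j mod N"
    unfolding NN by (rule modeq[OF A_basic(4)]) (use A_crt[OF i j] mi mj in auto)
  then have "gint N x y (m mod N) = gint N x y (crt p q i j mod N)" by simp
  then show ?thesis by (simp only: periodic_mod[OF gint_per])
qed

lemma A_shift_dvd:
  fixes n m d :: nat
  assumes "(n + m) mod d = n mod d"
  shows "d dvd m"
  using assms mod_eq_dvd_iff_nat[of n "n + m" d] by simp

lemma A_cross:
  assumes i: "i < p" and i': "i' < p" and j: "j < q" and j': "j' < q"
  shows "G i j + G i' j' = G i j' + G i' j"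
proof -
  define n where "n = crt p q i j"
  have n: "n < N" "n mod p = i" "n mod q = j" using A_crt[OF i j] by (auto simp: n_def)
  define s where "s = crt p q i j' + (N - n)"
  define t where "t = crt p q i' j + (N - n)"
  have ns: "n + s = crt p q i j' + N" using n by (simp add: s_def)
  have nt: "n + t = crt p q i' j + N" using n by (simp add: t_def)
  have Np: "N mod p = 0" "N mod q = 0" using NN by auto
  have "(n + s) mod p = n mod p" using ns n A_crt[OF i j'] NN by simp
  then have "p dvd s" by (rule A_shift_dvd)
  then obtain a where a: "s = a * p" by (metis dvd_def mult.commute)
  have "(n + t) mod q = n mod q" using nt n A_crt[OF i' j] NN by simp
  then have "q dvd t" by (rule A_shift_dvd)
  then obtain b where b: "t = b * q" by (metis dvd_def mult.commute)
  have g1: "gint N x y (n + s) = G i j'"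
    using ns gint_per[of N x y] unfolding periodic_def by simp
  have g2: "gint N x y (n + t) = G i' j"
    using nt gint_per[of N x y] unfolding periodic_def by simp
  have r1: "(n + s + t) mod p = i'"
  proof -
    have "(n + s + t) mod p = ((n + t) + a * p) mod p" using a by (simp add: algebra_simps)
    also have "\<dots> = (n + t) mod p" by simp
    also have "\<dots> = i'" using nt A_crt[OF i' j] NN by simp
    finally show ?thesis .
  qed
  have r2: "(n + s + t) mod q = j'"
  proof -
    have "(n + s + t) mod q = ((n + s) + b * q) mod q" using b by (simp add: algebra_simps)
    also have "\<dots> = (n + s) mod q" by simp
    also have "\<dots> = j'" using ns A_crt[OF i j'] NN by simp
    finally show ?thesis .
  qed
  have g3: "gint N x y (n + s + t) = G i' j'" using A_res[OF i' j' r1 r2] .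
  have "gint N x y (n + a * p + b * q) - gint N x y (n + a * p) - gint N x y (n + b * q) + gint N x y n = 0"
    by (rule A_cross0)
  then show ?thesis using g1 g2 g3 a b by (simp add: n_def)
qed


lemma A_vals: "G i j \<in> {-1, 0, 1}" by (rule gint_vals)

lemma A_false: False
proof -
  have p0: "p > 0" and q0: "q > 0" and N0: "N > 0" using A_basic by auto
  define Pos where "Pos = {n. n < N \<and> gint N x y n = 1}"
  define Neg where "Neg = {n. n < N \<and> gint N x y n = -1}"
  have cPos: "card Pos \<le> r" unfolding Pos_def by (rule card_pos_le[OF x])
  have cNeg: "card Neg \<le> r" unfolding Neg_def by (rule card_neg_le[OF y])
  have finPos: "finite Pos" and finNeg: "finite Neg" by (simp_all add: Pos_def Neg_def)
  define Rp where "Rp = {i. i < p \<and> (\<exists>j<q. G i j = 1)}"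
  define Cp where "Cp = {j. j < q \<and> (\<exists>i<p. G i j = 1)}"
  obtain n0 where n0: "n0 < N" "gint N x y n0 = 1" using exists_pos[OF x y N0 xy] by blast
  define i1 where "i1 = n0 mod p"
  define j1 where "j1 = n0 mod q"
  have i1: "i1 < p" using p0 by (simp add: i1_def)
  have j1: "j1 < q" using q0 by (simp add: j1_def)
  have G1: "G i1 j1 = 1" using A_res[OF i1 j1] n0 by (simp add: i1_def j1_def)
  have fin: "finite Rp" "finite Cp" by (auto simp: Rp_def Cp_def)
  have "Rp \<subseteq> (\<lambda>n. n mod p) ` Pos"
  proof
    fix i assume "i \<in> Rp"
    then obtain j where ij: "i < p" "j < q" "G i j = 1" by (auto simp: Rp_def)
    then have "crt p q i j \<in> Pos" using A_crt[OF ij(1,2)] by (simp add: Pos_def)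
    moreover have "crt p q i j mod p = i" using A_crt[OF ij(1,2)] by simp
    ultimately show "i \<in> (\<lambda>n. n mod p) ` Pos" by force
  qed
  then have "card Rp \<le> card ((\<lambda>n. n mod p) ` Pos)" by (intro card_mono) (simp add: finPos)
  also have "\<dots> \<le> card Pos" by (rule card_image_le[OF finPos])
  finally have "card Rp \<le> card Pos" .
  then have cR: "card Rp \<le> r" using cPos by simp
  have "Cp \<subseteq> (\<lambda>n. n mod q) ` Pos"
  proof
    fix j assume "j \<in> Cp"
    then obtain i where ij: "i < p" "j < q" "G i j = 1" by (auto simp: Cp_def)
    then have "crt p q i j \<in> Pos" using A_crt[OF ij(1,2)] by (simp add: Pos_def)
    moreover have "crt p q i j mod q = j" using A_crt[OF ij(1,2)] by simp
    ultimately show "j \<in> (\<lambda>n. n mod q) ` Pos" by force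
  qed
  then have "card Cp \<le> card ((\<lambda>n. n mod q) ` Pos)" by (intro card_mono) (simp add: finPos)
  also have "\<dots> \<le> card Pos" by (rule card_image_le[OF finPos])
  finally have "card Cp \<le> card Pos" .
  then have cC: "card Cp \<le> r" using cPos by simp
  obtain i0 where i0: "i0 < p" "i0 \<notin> Rp"
  proof -
    have "\<not> {..<p} \<subseteq> Rp"
    proof
      assume "{..<p} \<subseteq> Rp"
      then have "card {..<p} \<le> card Rp" using fin by (intro card_mono) auto
      then show False using cR rp by simp
    qed
    then show ?thesis using that by auto
  qed
  obtain j0 where j0: "j0 < q" "j0 \<notin> Cp"
  proof -
    have "\<not> {..<q} \<subseteq> Cp"
    proof
      assume "{..<q} \<subseteq> Cp"
      then have "card {..<q} \<le> card Cp" using fin by (intro card_mono) auto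
      then show False using cC rp pq by simp
    qed
    then show ?thesis using that by auto
  qed
  have notR: "G i j \<noteq> 1" if "i < p" "j < q" "i \<notin> Rp" for i j using that by (auto simp: Rp_def)
  have notC: "G i j \<noteq> 1" if "i < p" "j < q" "j \<notin> Cp" for i j using that by (auto simp: Cp_def)
  have le0: "G i j \<le> 0" if "G i j \<noteq> 1" for i j using that A_vals[of i j] by auto
  have K2: "G i j = -1" if ij: "i < p" "j < q" "i \<notin> Rp" "j \<notin> Cp" for i j
  proof -
    have "G i1 j1 + G i j = G i1 j + G i j1" by (rule A_cross[OF i1 ij(1) j1 ij(2)])
    moreover have "G i1 j \<le> 0" by (rule le0, rule notC[OF i1 ij(2) ij(4)])
    moreover have "G i j1 \<le> 0" by (rule le0, rule notR[OF ij(1) j1 ij(3)])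
    ultimately have "G i j \<le> -1" using G1 by simp
    then show ?thesis using A_vals[of i j] by auto
  qed
  have G00: "G i0 j0 = -1" by (rule K2[OF i0(1) j0(1) i0(2) j0(2)])
  have K1: "G i j = 1" if ij: "i \<in> Rp" "j \<in> Cp" for i j
  proof -
    obtain j' where j': "j' < q" "G i j' = 1" using ij(1) by (auto simp: Rp_def)
    obtain i' where i': "i' < p" "G i' j = 1" using ij(2) by (auto simp: Cp_def)
    have i: "i < p" using ij(1) by (simp add: Rp_def)
    have j: "j < q" using ij(2) by (simp add: Cp_def)
    have "G i j' + G i0 j0 = G i j0 + G i0 j'" by (rule A_cross[OF i i0(1) j' (1) j0(1)])
    moreover have "G i j0 \<le> 0" by (rule le0, rule notC[OF i j0(1) j0(2)])
    moreover have "G i0 j' \<le> 0" by (rule le0, rule notR[OF i0(1) j'(1) i0(2)])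
    ultimately have a: "G i j0 = 0" using j'(2) G00 by simp
    have "G i' j + G i0 j0 = G i' j0 + G i0 j" by (rule A_cross[OF i'(1) i0(1) j j0(1)])
    moreover have "G i' j0 \<le> 0" by (rule le0, rule notC[OF i'(1) j0(1) j0(2)])
    moreover have "G i0 j \<le> 0" by (rule le0, rule notR[OF i0(1) j i0(2)])
    ultimately have b: "G i0 j = 0" using i'(2) G00 by simp
    have "G i j + G i0 j0 = G i j0 + G i0 j" by (rule A_cross[OF i i0(1) j j0(1)])
    then show ?thesis using a b G00 by simp
  qed
  have injc: "inj_on (\<lambda>(i, j). crt p q i j) ({..<p} \<times> {..<q})"
  proof (rule inj_onI, clarify)
    fix i j i' j' assume "i < p" "j < q" "i' < p" "j' < q" and e: "crt p q i j = crt p q i' j'"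
    then show "i = i' \<and> j = j'" using A_crt[of i j] A_crt[of i' j'] by metis
  qed
  have sub1: "Rp \<times> Cp \<subseteq> {..<p} \<times> {..<q}" by (auto simp: Rp_def Cp_def)
  have sub2: "({..<p} - Rp) \<times> ({..<q} - Cp) \<subseteq> {..<p} \<times> {..<q}" by auto
  have img1: "(\<lambda>(i, j). crt p q i j) ` (Rp \<times> Cp) \<subseteq> Pos"
  proof
    fix n assume "n \<in> (\<lambda>(i, j). crt p q i j) ` (Rp \<times> Cp)"
    then obtain i j where ij: "i \<in> Rp" "j \<in> Cp" "n = crt p q i j" by auto
    have lt: "i < p" "j < q" using ij by (auto simp: Rp_def Cp_def)
    show "n \<in> Pos" using K1[OF ij(1,2)] A_crt[OF lt] ij(3) by (simp add: Pos_def)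
  qed
  have c1: "card ((\<lambda>(i, j). crt p q i j) ` (Rp \<times> Cp)) = card Rp * card Cp"
    using inj_on_subset[OF injc sub1] by (simp add: card_image card_cartesian_product)
  have "card ((\<lambda>(i, j). crt p q i j) ` (Rp \<times> Cp)) \<le> card Pos" by (rule card_mono[OF finPos img1])
  then have uv: "card Rp * card Cp \<le> r" using c1 cPos by linarith
  have img2: "(\<lambda>(i, j). crt p q i j) ` (({..<p} - Rp) \<times> ({..<q} - Cp)) \<subseteq> Neg"
  proof
    fix n assume "n \<in> (\<lambda>(i, j). crt p q i j) ` (({..<p} - Rp) \<times> ({..<q} - Cp))"
    then obtain i j where ij: "i < p" "i \<notin> Rp" "j < q" "j \<notin> Cp" "n = crt p q i j" by auto
    show "n \<in> Neg" using K2[OF ij(1,3,2,4)] A_crt[OF ij(1,3)] ij(5) by (simp add: Neg_def)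
  qed
  have c2: "card ((\<lambda>(i, j). crt p q i j) ` (({..<p} - Rp) \<times> ({..<q} - Cp))) = (p - card Rp) * (q - card Cp)"
  proof -
    have "card ({..<p} - Rp) = p - card Rp" using fin by (subst card_Diff_subset) (auto simp: Rp_def)
    moreover have "card ({..<q} - Cp) = q - card Cp" using fin by (subst card_Diff_subset) (auto simp: Cp_def)
    ultimately show ?thesis
      using inj_on_subset[OF injc sub2] by (simp add: card_image card_cartesian_product)
  qed
  have "card ((\<lambda>(i, j). crt p q i j) ` (({..<p} - Rp) \<times> ({..<q} - Cp))) \<le> card Neg" by (rule card_mono[OF finNeg img2])
  then have uv2: "(p - card Rp) * (q - card Cp) \<le> r" using c2 cNeg by linarith
  have "i1 \<in> Rp" using i1 j1 G1 by (auto simp: Rp_def)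
  then have u1: "1 \<le> card Rp" using fin by (metis One_nat_def Suc_leI card_gt_0_iff empty_iff)
  have "j1 \<in> Cp" using i1 j1 G1 by (auto simp: Cp_def)
  then have v1: "1 \<le> card Cp" using fin by (metis One_nat_def Suc_leI card_gt_0_iff empty_iff)
  have "p + q \<le> card Rp * card Cp + (p - card Rp) * (q - card Cp) + 2"
    by (rule bilinear_bound) (use u1 v1 cR cC rp pq in auto)
  then show False using uv uv2 rp pq by linarith
qed

end



lemma ev_sum: "finite A \<Longrightarrow> ev (sum f A) z = (\<Sum>a\<in>A. ev (f a) z)"
  by (induction A rule: finite_induct) auto

lemma ev_four:
  "ev (\<Sum>n<N. monom (gint N x y n) n) (zeta N ^ j) = four N (\<lambda>n. complex_of_int (gint N x y n)) j"
  unfolding four_def by (simp add: ev_sum power_mult)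

lemma not_coprime_prime:
  fixes q k :: nat
  assumes "prime q" "\<not> coprime k q" shows "q dvd k"
proof (rule ccontr)
  assume "\<not> q dvd k"
  then have "coprime q k" by (rule prime_imp_coprime[OF assms(1)])
  then have "coprime k q" by (simp add: ac_simps)
  then show False using assms(2) by simp
qed

lemma maxK:
  fixes p q r L :: nat
  assumes r0: "0 < r" and maxL: "Max {k. \<exists>l\<in>{0,1::nat}. \<exists>m\<in>{0,1::nat}. k = p ^ l * q ^ m \<and> k \<le> r} \<le> L"
  shows "1 \<le> L \<and> (p \<le> r \<longrightarrow> p \<le> L) \<and> (q \<le> r \<longrightarrow> q \<le> L)"
proof -
  define K where "K = {k. \<exists>l\<in>{0,1::nat}. \<exists>m\<in>{0,1::nat}. k = p ^ l * q ^ m \<and> k \<le> r}"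
  have "K \<subseteq> {1, p, q, p * q}"
  proof
    fix k assume "k \<in> K"
    then obtain l m where lm: "l \<in> {0,1::nat}" "m \<in> {0,1::nat}" "k = p ^ l * q ^ m" unfolding K_def by blast
    then show "k \<in> {1, p, q, p * q}" by auto
  qed
  then have finK: "finite K" by (rule finite_subset) simp
  have inK: "k \<le> L" if "k \<in> K" for k
    using Max_ge[OF finK that] maxL unfolding K_def by simp
  have "1 = p ^ 0 * q ^ 0 \<and> 1 \<le> r" using r0 by simp
  then have "1 \<in> K" unfolding K_def by blast
  moreover have "p \<in> K" if "p \<le> r"
  proof -
    have "p = p ^ 1 * q ^ 0 \<and> p \<le> r" using that by simp
    then show ?thesis unfolding K_def by blast
  qed
  moreover have "q \<in> K" if "q \<le> r"
  proof -
    have "q = p ^ 0 * q ^ 1 \<and> q \<le> r" using that by simp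
    then show ?thesis unfolding K_def by blast
  qed
  ultimately show ?thesis using inK by blast
qed

theorem theorem2:
  fixes p q N r L :: nat
  assumes "prime p" and "prime q" and "1 < p" and "p \<le> q"
    and "N = p * q" and "odd N"
    and "0 < r" and "r \<le> (N - 1) div 2"
    and "Max {k. \<exists>l\<in>{0,1::nat}. \<exists>m\<in>{0,1::nat}. k = p ^ l * q ^ m \<and> k \<le> r} \<le> L"
    and "L \<le> (N - 1) div 2"
  shows "uniquely_solvable N r L"
proof -
  note pP = assms(1) and qP = assms(2) and pleq = assms(4) and NN = assms(5) and r0 = assms(7)
  note maxL = assms(9)
  have p0: "p > 0" and q0: "q > 0" using pP qP prime_gt_0_nat by auto
  have N0: "N > 0" using NN p0 q0 by simp
  have mk: "1 \<le> L \<and> (p \<le> r \<longrightarrow> p \<le> L) \<and> (q \<le> r \<longrightarrow> q \<le> L)"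
    by (rule maxK[OF r0 maxL])
  have L1: "1 \<le> L" using mk by blast
  have Lp: "p \<le> L" if "p \<le> r" using mk that by blast
  have Lq: "q \<le> L" if "q \<le> r" using mk that by blast
  show ?thesis
    unfolding uniquely_solvable_def
  proof (intro ballI impI)
    fix x y assume x: "x \<in> Omega N r" and y: "y \<in> Omega N r" and xy: "x \<noteq> y"
    show "L_distinguishable N L x y"
    proof (rule ccontr)
      assume "\<not> L_distinguishable N L x y"
      then have eqm: "dft N x m = dft N y m" if "1 \<le> m" "m \<le> L" for m
        using that unfolding L_distinguishable_def by auto
      define g where "g = (\<lambda>n. complex_of_int (gint N x y n))"
      define D where "D = (\<Sum>n<N. monom (gint N x y n) n)"
      have evD: "ev D (zeta N ^ j) = four N g j" for j
        unfolding D_def g_def by (rule ev_four)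
      have vL: "four N g m = 0" if "1 \<le> m" "m \<le> L" for m
        using dft_diff[OF N0 x y, of m] eqm[OF that] unfolding g_def by simp
      have V0: "four N g 0 = 0" unfolding g_def by (rule four_zero[OF N0 x y])
      have zN: "zeta N ^ N = 1" by (rule zeta_N[OF N0])
      have V1: "four N g k = 0" if ck: "coprime k N" for k
      proof -
        have e1: "ev D (zeta N) = 0" using vL[of 1] L1 evD[of 1] by simp
        have "ev D (zeta N ^ k) = 0" by (rule galois[OF zN N0 ck e1])
        then show ?thesis using evD[of k] by simp
      qed
      have Vp: "four N g (p * k) = 0" if pr: "p \<le> r" and ck: "coprime k q" for k
      proof -
        have e1: "ev D (zeta N ^ p) = 0" using vL[of p] Lp[OF pr] evD[of p] p0 by simp
        have "(zeta N ^ p) ^ q = zeta N ^ (p * q)" by (simp only: power_mult)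
        then have wq: "(zeta N ^ p) ^ q = 1" using zN NN by simp
        have "ev D ((zeta N ^ p) ^ k) = 0" by (rule galois[OF wq q0 ck e1])
        then have "ev D (zeta N ^ (p * k)) = 0" by (simp only: power_mult)
        then show ?thesis using evD[of "p * k"] by simp
      qed
      have Vq: "four N g (q * k) = 0" if qr: "q \<le> r" and ck: "coprime k p" for k
      proof -
        have e1: "ev D (zeta N ^ q) = 0" using vL[of q] Lq[OF qr] evD[of q] q0 by simp
        have "(zeta N ^ q) ^ p = zeta N ^ (q * p)" by (simp only: power_mult)
        also have "q * p = N" using NN by simp
        finally have wq: "(zeta N ^ q) ^ p = 1" using zN by simp
        have "ev D ((zeta N ^ q) ^ k) = 0" by (rule galois[OF wq p0 ck e1])
        then have "ev D (zeta N ^ (q * k)) = 0" by (simp only: power_mult)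
        then show ?thesis using evD[of "q * k"] by simp
      qed
      have Nj: "False" if "j < N" "j \<noteq> 0" "N dvd j" for j
        using that by (meson nat_dvd_not_less neq0_conv)
      consider (C) "q \<le> r" | (B) "r < q" "p \<le> r \<or> p = q" | (A) "r < p" "p < q"
        using pleq by linarith
      then show False
      proof cases
        case C
        have "four N g j = 0" if j: "j < N" for j
        proof (cases "j = 0")
          case True then show ?thesis using V0 by simp
        next
          case j0: False
          show ?thesis
          proof (cases "coprime j N")
            case True then show ?thesis by (rule V1)
          next
            case False
            then have "\<not> coprime j p \<or> \<not> coprime j q" using NN by simp
            then have "p dvd j \<or> q dvd j" using not_coprime_prime pP qP by blast
            then show ?thesis
            proof
              assume "p dvd j"
              then obtain k where k: "j = p * k" by blast
              show ?thesis
              proof (cases "coprime k q")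
                case True then show ?thesis using Vp[OF _ True] C pleq k by simp
              next
                case False
                then have "q dvd k" using not_coprime_prime qP by blast
                then have "N dvd j" using k NN by simp
                then show ?thesis using Nj j j0 by blast
              qed
            next
              assume "q dvd j"
              then obtain k where k: "j = q * k" by blast
              show ?thesis
              proof (cases "coprime k p")
                case True then show ?thesis using Vq[OF C True] k by simp
              next
                case False
                then have "p dvd k" using not_coprime_prime pP by blast
                then have "N dvd j" using k NN by (simp add: mult.commute)
                then show ?thesis using Nj j j0 by blast
              qed
            qed
          qed
        qed
        then have "x = y" using caseC[OF N0 x y] unfolding g_def by blast
        then show False using xy by simp
      next
        case B
        have "four N g j = 0" if j: "j < N" and jj: "j = 0 \<or> \<not> q dvd j" for j
        proof (cases "j = 0")
          case True then show ?thesis using V0 by simp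
        next
          case j0: False
          then have nq: "\<not> q dvd j" using jj by simp
          show ?thesis
          proof (cases "coprime j N")
            case True then show ?thesis by (rule V1)
          next
            case False
            then have "\<not> coprime j p \<or> \<not> coprime j q" using NN by simp
            then have "p dvd j" using not_coprime_prime pP qP nq by blast
            then obtain k where k: "j = p * k" by blast
            have "\<not> q dvd k"
            proof
              assume "q dvd k"
              then have "q dvd j" using k by simp
              then show False using nq by simp
            qed
            then have ck: "coprime k q" using prime_imp_coprime[OF qP] coprime_commute by blast
            show ?thesis
            proof (cases "p \<le> r")
              case True then show ?thesis using Vp[OF True ck] k by simp
            next
              case False
              then have "p = q" using B by simp
              then show ?thesis using nq \<open>p dvd j\<close> by simp
            qed
          qed
        qed
        then have "q \<le> r" using caseB[OF NN p0 q0 x y xy] unfolding g_def by blast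
        then show False using B by simp
      next
        case A
        have van: "four N (\<lambda>n. complex_of_int (gint N x y n)) j = 0" if "j < N" "j = 0 \<or> coprime j N" for j
          using that V0 V1 unfolding g_def by blast
        show False using A_false[OF pP qP A(2) NN x y xy A(1) van] .
      qed
    qed
  qed
qed


end
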